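(* Let $k$ be a field and let $A$ be a just infinite $k$-algebra whose Jacobson radical $J(A)$ is nonzero. Then $A$ has only finitely many prime ideals.
   Context: All rings are associative unital algebras over a field. A $k$-algebra $A$ is called just infinite if $\dim_k(A)=\infty$ and every nonzero two-sided ideal of $A$ has finite codimension in $A$. *)

theory Defs
  imports Main "HOL.Vector_Spaces"
begin

locale k_algebra = vector_space scale
  for scale :: "'k::field \<Rightarrow> 'a::ring_1 \<Rightarrow> 'a" +
  assumes scale_mult_left: "scale c (x * y) = scale c x * y"
      and scale_mult_right: "scale c (x * y) = x * scale c y"

definition two_sided_ideal :: "'a::ring_1 set \<Rightarrow> bool" where
  "two_sided_ideal I \<longleftrightarrow> 0 \<in> I \<and> (\<forall>x\<in>I. \<forall>y\<in>I. x + y \<in> I) \<and> (\<forall>x\<in>I. - x \<in> I)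
     \<and> (\<forall>x\<in>I. \<forall>a. a * x \<in> I \<and> x * a \<in> I)"

definition left_ideal :: "'a::ring_1 set \<Rightarrow> bool" where
  "left_ideal I \<longleftrightarrow> 0 \<in> I \<and> (\<forall>x\<in>I. \<forall>y\<in>I. x + y \<in> I) \<and> (\<forall>x\<in>I. - x \<in> I)
     \<and> (\<forall>x\<in>I. \<forall>a. a * x \<in> I)"

definition maximal_left_ideal :: "'a::ring_1 set \<Rightarrow> bool" where
  "maximal_left_ideal M \<longleftrightarrow> left_ideal M \<and> M \<noteq> UNIV
     \<and> (\<forall>N. left_ideal N \<and> M \<subseteq> N \<and> N \<noteq> UNIV \<longrightarrow> N = M)"

definition jacobson_radical :: "'a::ring_1 set" where
  "jacobson_radical = \<Inter> {M. maximal_left_ideal M}"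

definition prime_ideal :: "'a::ring_1 set \<Rightarrow> bool" where
  "prime_ideal P \<longleftrightarrow> two_sided_ideal P \<and> P \<noteq> UNIV \<and>
     (\<forall>I J. two_sided_ideal I \<longrightarrow> two_sided_ideal J \<longrightarrow>
        (\<forall>x\<in>I. \<forall>y\<in>J. x * y \<in> P) \<longrightarrow> I \<subseteq> P \<or> J \<subseteq> P)"

context k_algebra
begin

definition infinite_dimensional :: bool where
  "infinite_dimensional \<longleftrightarrow> \<not> (\<exists>F. finite F \<and> span F = UNIV)"

text \<open>I has finite codimension: the quotient A/I is finite-dimensional, i.e. it is
  spanned by the images of a finite set F.\<close>
definition finite_codim :: "'a set \<Rightarrow> bool" where
  "finite_codim I \<longleftrightarrow> (\<exists>F. finite F \<and> (\<forall>a. \<exists>s\<in>span F. a - s \<in> I))"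

definition just_infinite :: bool where
  "just_infinite \<longleftrightarrow> infinite_dimensional \<and>
     (\<forall>I. two_sided_ideal I \<and> I \<noteq> {0} \<longrightarrow> finite_codim I)"

end

end

theory Submission
  imports Defs
begin

definition gen_ideal :: "'a::ring_1 set \<Rightarrow> 'a set" where
  "gen_ideal S = \<Inter> {T. two_sided_ideal T \<and> S \<subseteq> T}"

lemma gen_ideal_ideal: "two_sided_ideal (gen_ideal S)"
  unfolding gen_ideal_def two_sided_ideal_def by blast

lemma gen_ideal_sup: "S \<subseteq> gen_ideal S"
  unfolding gen_ideal_def by blast

lemma gen_ideal_least: "two_sided_ideal T \<Longrightarrow> S \<subseteq> T \<Longrightarrow> gen_ideal S \<subseteq> T"
  unfolding gen_ideal_def by blast

lemma two_sided_left: "two_sided_ideal I \<Longrightarrow> left_ideal I"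
  by (simp add: two_sided_ideal_def left_ideal_def)

lemma left_ideal_sum:
  fixes a :: "'a::ring_1"
  assumes N: "left_ideal N" and M: "left_ideal M"
  shows "left_ideal {n*a + m | n m. n \<in> N \<and> m \<in> M}"
  unfolding left_ideal_def
proof (intro conjI ballI allI)
  show "0 \<in> {n*a + m | n m. n \<in> N \<and> m \<in> M}"
    using N M unfolding left_ideal_def by (metis (mono_tags, lifting) add_0 mem_Collect_eq mult_zero_left)
next
  fix x y assume x: "x \<in> {n*a + m | n m. n \<in> N \<and> m \<in> M}" and y: "y \<in> {n*a + m | n m. n \<in> N \<and> m \<in> M}"
  then obtain n1 m1 n2 m2 where "x = n1*a+m1" "y = n2*a+m2" "n1 \<in> N" "n2 \<in> N" "m1 \<in> M" "m2 \<in> M" by blast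
  moreover have "x + y = (n1+n2)*a + (m1+m2)" using calculation by (simp add: algebra_simps)
  ultimately show "x + y \<in> {n*a + m | n m. n \<in> N \<and> m \<in> M}"
    using N M unfolding left_ideal_def by blast
next
  fix x assume x: "x \<in> {n*a + m | n m. n \<in> N \<and> m \<in> M}"
  then obtain n1 m1 where "x = n1*a+m1" "n1 \<in> N" "m1 \<in> M" by blast
  moreover have "- x = (-n1)*a + (-m1)" using calculation by (simp add: algebra_simps)
  ultimately show "- x \<in> {n*a + m | n m. n \<in> N \<and> m \<in> M}"
    using N M unfolding left_ideal_def by blast
next
  fix x d assume x: "x \<in> {n*a + m | n m. n \<in> N \<and> m \<in> M}"
  then obtain n1 m1 where "x = n1*a+m1" "n1 \<in> N" "m1 \<in> M" by blast
  moreover have "d * x = (d*n1)*a + (d*m1)" using calculation by (simp add: algebra_simps)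
  ultimately show "d * x \<in> {n*a + m | n m. n \<in> N \<and> m \<in> M}"
    using N M unfolding left_ideal_def by blast
qed

lemma right_ann_ideal:
  assumes T: "two_sided_ideal T" and P: "two_sided_ideal P"
  shows "two_sided_ideal {y. \<forall>t\<in>T. t*y \<in> P}"
  unfolding two_sided_ideal_def
proof (intro conjI ballI allI)
  show "0 \<in> {y. \<forall>t\<in>T. t*y \<in> P}" using P by (simp add: two_sided_ideal_def)
next
  fix x y assume "x \<in> {y. \<forall>t\<in>T. t*y \<in> P}" "y \<in> {y. \<forall>t\<in>T. t*y \<in> P}"
  then show "x + y \<in> {y. \<forall>t\<in>T. t*y \<in> P}" using P by (simp add: two_sided_ideal_def distrib_left)
next
  fix x assume "x \<in> {y. \<forall>t\<in>T. t*y \<in> P}"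
  then show "- x \<in> {y. \<forall>t\<in>T. t*y \<in> P}" using P by (simp add: two_sided_ideal_def)
next
  fix x a assume x: "x \<in> {y. \<forall>t\<in>T. t*y \<in> P}"
  show "a * x \<in> {y. \<forall>t\<in>T. t*y \<in> P}"
  proof (intro CollectI ballI)
    fix t assume "t \<in> T"
    then have "t * a \<in> T" using T by (simp add: two_sided_ideal_def)
    then show "t * (a * x) \<in> P" using x by (simp add: mult.assoc[symmetric])
  qed
  show "x * a \<in> {y. \<forall>t\<in>T. t*y \<in> P}"
  proof (intro CollectI ballI)
    fix t assume "t \<in> T"
    then have "t * x \<in> P" using x by simp
    then show "t * (x * a) \<in> P" using P by (simp add: two_sided_ideal_def mult.assoc[symmetric])
  qed
qed

lemma prime_ann:
  assumes "prime_ideal P" "two_sided_ideal T" "\<forall>t\<in>T. \<forall>l\<in>L. t*l \<in> P" "\<not> L \<subseteq> P"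
  shows "T \<subseteq> P"
proof -
  let ?Y = "{y. \<forall>t\<in>T. t*y \<in> P}"
  have Y: "two_sided_ideal ?Y" using right_ann_ideal assms(1,2) prime_ideal_def by blast
  have "L \<subseteq> ?Y" using assms(3) by blast
  then have "\<not> ?Y \<subseteq> P" using assms(4) by blast
  moreover have "\<forall>x\<in>T. \<forall>y\<in>?Y. x*y \<in> P" by blast
  ultimately show ?thesis using assms(1,2) Y unfolding prime_ideal_def by blast
qed

lemma li_0: "left_ideal I \<Longrightarrow> 0 \<in> I"
  by (simp add: left_ideal_def)
lemma li_add: "left_ideal I \<Longrightarrow> x \<in> I \<Longrightarrow> y \<in> I \<Longrightarrow> x + y \<in> I"
  by (simp add: left_ideal_def)
lemma li_neg: "left_ideal I \<Longrightarrow> x \<in> I \<Longrightarrow> - x \<in> I"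
  by (simp add: left_ideal_def)
lemma li_mult: "left_ideal I \<Longrightarrow> x \<in> I \<Longrightarrow> a * x \<in> I"
  by (simp add: left_ideal_def)
lemma li_diff: "left_ideal I \<Longrightarrow> x \<in> I \<Longrightarrow> y \<in> I \<Longrightarrow> x - y \<in> I"
  using li_add[of I x "- y"] li_neg[of I y] by simp
lemma mli_li: "maximal_left_ideal M \<Longrightarrow> left_ideal M"
  by (simp add: maximal_left_ideal_def)
lemma mli_max: "maximal_left_ideal M \<Longrightarrow> left_ideal N \<Longrightarrow> M \<subseteq> N \<Longrightarrow> N \<noteq> UNIV \<Longrightarrow> N = M"
  by (simp add: maximal_left_ideal_def)

lemma left_ideal_colon:
  assumes "left_ideal M"
  shows "left_ideal {b. b * a \<in> M}"
  unfolding left_ideal_def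
proof (intro conjI ballI allI)
  show "0 \<in> {b. b * a \<in> M}" using li_0[OF assms] by simp
  show "x + y \<in> {b. b * a \<in> M}" if "x \<in> {b. b * a \<in> M}" "y \<in> {b. b * a \<in> M}" for x y
    using that li_add[OF assms, of "x*a" "y*a"] by (simp add: distrib_right)
  show "- x \<in> {b. b * a \<in> M}" if "x \<in> {b. b * a \<in> M}" for x
    using that li_neg[OF assms, of "x*a"] by simp
  show "d * x \<in> {b. b * a \<in> M}" if "x \<in> {b. b * a \<in> M}" for x d
    using that li_mult[OF assms, of "x*a" d] by (simp add: mult.assoc)
qed

lemma colon_maximal:
  fixes a :: "'a::ring_1"
  assumes HM: "left_ideal M"
    and between: "\<And>K. left_ideal K \<Longrightarrow> M \<subseteq> K \<Longrightarrow> K \<subseteq> {b*a + m | b m. m \<in> M} \<Longrightarrow> K = M \<or> K = {b*a + m | b m. m \<in> M}"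
    and ne: "{b. b * a \<in> M} \<noteq> UNIV"
  shows "maximal_left_ideal {b. b * a \<in> M}"
  unfolding maximal_left_ideal_def
proof (intro conjI allI impI)
  let ?Ma = "{b. b * a \<in> M}"
  show "left_ideal ?Ma" by (rule left_ideal_colon[OF HM])
  show "?Ma \<noteq> UNIV" by (rule ne)
  fix N assume N: "left_ideal N \<and> ?Ma \<subseteq> N \<and> N \<noteq> UNIV"
  then have NL: "left_ideal N" and NS: "?Ma \<subseteq> N" and NU: "N \<noteq> UNIV" by auto
  let ?Na = "{n*a + m | n m. n \<in> N \<and> m \<in> M}"
  have NaL: "left_ideal ?Na" using left_ideal_sum[OF NL HM] by simp
  have MNa: "M \<subseteq> ?Na"
  proof
    fix m assume "m \<in> M"
    moreover have "0 \<in> N" by (rule li_0[OF NL])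
    ultimately have "0 * a + m \<in> ?Na" by blast
    then show "m \<in> ?Na" by simp
  qed
  have sub: "?Na \<subseteq> {b*a + m | b m. m \<in> M}" by blast
  from between[OF NaL MNa sub] show "N = ?Ma"
  proof
    assume e: "?Na = M"
    have "N \<subseteq> ?Ma"
    proof
      fix n assume "n \<in> N"
      moreover have "0 \<in> M" by (rule li_0[OF HM])
      ultimately have "n*a + 0 \<in> ?Na" by blast
      then have "n*a \<in> M" using e by simp
      then show "n \<in> ?Ma" by simp
    qed
    then show ?thesis using NS by blast
  next
    assume e: "?Na = {b*a + m | b m. m \<in> M}"
    have "b \<in> N" for b
    proof -
      have "b * a + 0 \<in> {b*a + m | b m. m \<in> M}" using li_0[OF HM] by blast
      then have "b * a \<in> ?Na" using e by simp
      then obtain n m where nm: "b*a = n*a + m" "n \<in> N" "m \<in> M" by blast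
      then have "(b - n) * a = m" by (simp add: algebra_simps)
      then have "b - n \<in> ?Ma" using nm by simp
      then have "b - n \<in> N" using NS by blast
      then have "(b - n) + n \<in> N" using li_add[OF NL] nm by blast
      then show ?thesis by simp
    qed
    then show ?thesis using NU by blast
  qed
qed

lemma jac_two_sided: "two_sided_ideal (jacobson_radical :: 'a::ring_1 set)"
proof -
  have J: "jacobson_radical = \<Inter> {M::'a set. maximal_left_ideal M}" by (rule jacobson_radical_def)
  have mem: "x \<in> jacobson_radical \<longleftrightarrow> (\<forall>M. maximal_left_ideal M \<longrightarrow> x \<in> M)" for x :: 'a
    unfolding J by blast
  have right: "x * a \<in> M" if x: "x \<in> jacobson_radical" and M: "maximal_left_ideal M" for x a :: 'a and M
  proof (cases "{b. b * a \<in> M} = UNIV")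
    case True then show ?thesis by blast
  next
    case False
    have HM: "left_ideal M" by (rule mli_li[OF M])
    have all: "{b*a + m | b m. m \<in> M} = UNIV"
    proof -
      have "left_ideal {b*a + m | b m. b \<in> (UNIV::'a set) \<and> m \<in> M}"
        by (rule left_ideal_sum[OF _ HM]) (simp add: left_ideal_def)
      then have L: "left_ideal {b*a + m | b m. m \<in> M}" by simp
      have "M \<subseteq> {b*a + m | b m. m \<in> M}"
      proof
        fix m assume "m \<in> M" then have "0*a + m \<in> {b*a + m | b m. m \<in> M}" by blast
        then show "m \<in> {b*a + m | b m. m \<in> M}" by simp
      qed
      moreover have "{b*a + m | b m. m \<in> M} \<noteq> M"
      proof
        assume e: "{b*a + m | b m. m \<in> M} = M"
        have "b * a \<in> M" for b
        proof -
          have "b * a + 0 \<in> {b*a + m | b m. m \<in> M}" using li_0[OF HM] by blast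
          then show ?thesis using e by simp
        qed
        then show False using False by blast
      qed
      ultimately show ?thesis using mli_max[OF M L] by blast
    qed
    have "maximal_left_ideal {b. b * a \<in> M}"
    proof (rule colon_maximal[OF HM _ False])
      fix K assume "left_ideal K" "M \<subseteq> K" "K \<subseteq> {b*a + m | b m. m \<in> M}"
      then have "K = M \<or> K = UNIV" using mli_max[OF M] by blast
      then show "K = M \<or> K = {b*a + m | b m. m \<in> M}" using all by simp
    qed
    then have "x \<in> {b. b * a \<in> M}" using x mem by blast
    then show ?thesis by simp
  qed
  show ?thesis
    unfolding two_sided_ideal_def
  proof (intro conjI ballI allI)
    show "0 \<in> (jacobson_radical :: 'a set)" using mli_li li_0 unfolding mem by blast
    show "x + y \<in> (jacobson_radical :: 'a set)" if "x \<in> jacobson_radical" "y \<in> jacobson_radical" for x y :: 'a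
      using that mli_li li_add unfolding mem by blast
    show "- x \<in> (jacobson_radical :: 'a set)" if "x \<in> jacobson_radical" for x :: 'a
      using that mli_li li_neg unfolding mem by blast
    show "a * x \<in> (jacobson_radical :: 'a set)" if "x \<in> jacobson_radical" for x a :: 'a
      using that mli_li li_mult unfolding mem by blast
    show "x * a \<in> (jacobson_radical :: 'a set)" if "x \<in> jacobson_radical" for x a :: 'a
      using right[OF that] unfolding mem by blast
  qed
qed


context k_algebra
begin

lemma li_subspace: "left_ideal L \<Longrightarrow> subspace L"
  unfolding subspace_def
proof (intro conjI ballI allI)
  assume L: "left_ideal L"
  show "0 \<in> L" by (rule li_0[OF L])
  show "x + y \<in> L" if "x \<in> L" "y \<in> L" for x y using li_add[OF L that] .
  show "scale c x \<in> L" if "x \<in> L" for c x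
  proof -
    have "scale c x = scale c (1 * x)" by simp
    also have "\<dots> = scale c 1 * x" by (rule scale_mult_left)
    finally show ?thesis using li_mult[OF L that] by simp
  qed
qed

lemma my_dim_strict:
  assumes "subspace U" "subspace W" "U \<subset> W" "W \<subseteq> span F" "finite F"
  shows "dim U < dim W"
proof -
  obtain B where B: "B \<subseteq> U" "independent B" "U \<subseteq> span B" "card B = dim U"
    using basis_exists by blast
  obtain w where w: "w \<in> W" "w \<notin> U" using assms(3) by blast
  have "span B \<subseteq> U" using span_minimal[OF B(1) assms(1)] .
  then have "w \<notin> span B" using w by blast
  then have ind: "independent (insert w B)" using independent_insertI B(2) by blast
  have sub: "insert w B \<subseteq> W" using B(1) assms(3) w by blast
  obtain C where C: "insert w B \<subseteq> C" "C \<subseteq> W" "independent C" "W \<subseteq> span C"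
    using maximal_independent_subset_extend[OF sub ind] by blast
  have "C \<subseteq> span F" using C(2) assms(4) by blast
  then have fC: "finite C" using independent_span_bound[OF assms(5) C(3)] by blast
  have cC: "card C = dim W" using basis_card_eq_dim[OF C(2) C(4) C(3)] .
  have fB: "finite B" using finite_subset[of B C] C(1) fC by blast
  have "card (insert w B) \<le> card C" by (rule card_mono[OF fC C(1)])
  moreover have "w \<notin> B" using w B(1) by blast
  then have "card (insert w B) = Suc (card B)" using fB by simp
  ultimately show ?thesis using B(4) cC by simp
qed

lemma dim_strict_codim:
  assumes "subspace S1" "subspace S2" "S1 \<subset> S2" "I \<subseteq> S1" "finite F"
    "\<forall>a. \<exists>s\<in>span F. a - s \<in> I"
  shows "dim (S1 \<inter> span F) < dim (S2 \<inter> span F)"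
proof (rule my_dim_strict)
  show "subspace (S1 \<inter> span F)" using subspace_inter[OF assms(1) subspace_span] .
  show "subspace (S2 \<inter> span F)" using subspace_inter[OF assms(2) subspace_span] .
  show "S2 \<inter> span F \<subseteq> span F" by blast
  show "finite F" by (rule assms(5))
  obtain x where x: "x \<in> S2" "x \<notin> S1" using assms(3) by blast
  obtain s where s: "s \<in> span F" "x - s \<in> I" using assms(6) by blast
  have "x - s \<in> S2" using s(2) assms(3,4) by blast
  then have "x - (x - s) \<in> S2" using subspace_diff[OF assms(2) x(1)] by blast
  then have s2: "s \<in> S2" by simp
  have "s \<notin> S1"
  proof
    assume "s \<in> S1"
    then have "s + (x - s) \<in> S1" using subspace_add[OF assms(1)] s(2) assms(4) by blast
    then show False using x(2) by simp
  qed
  then show "S1 \<inter> span F \<subset> S2 \<inter> span F" using s s2 assms(3) by blast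
qed

lemma minimal_left:
  assumes "left_ideal I" "I \<noteq> UNIV" "finite F" "\<forall>a. \<exists>s\<in>span F. a - s \<in> I"
  shows "\<exists>L. left_ideal L \<and> I \<subset> L \<and> (\<forall>K. left_ideal K \<and> I \<subseteq> K \<and> K \<subseteq> L \<longrightarrow> K = I \<or> K = L)"
proof -
  let ?P = "\<lambda>n. \<exists>L. left_ideal L \<and> I \<subset> L \<and> dim (L \<inter> span F) = n"
  have "left_ideal (UNIV :: 'a set)" by (simp add: left_ideal_def)
  then have "?P (dim (UNIV \<inter> span F))" using assms(2) by blast
  then obtain n where n: "?P n" "\<forall>m<n. \<not> ?P m" using exists_least_iff[of ?P] by blast
  then obtain L where L: "left_ideal L" "I \<subset> L" "dim (L \<inter> span F) = n" by blast
  have "\<forall>K. left_ideal K \<and> I \<subseteq> K \<and> K \<subseteq> L \<longrightarrow> K = I \<or> K = L"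
  proof (intro allI impI)
    fix K assume K: "left_ideal K \<and> I \<subseteq> K \<and> K \<subseteq> L"
    show "K = I \<or> K = L"
    proof (rule ccontr)
      assume nn: "\<not> (K = I \<or> K = L)"
      then have KL: "K \<subset> L" and IK: "I \<subset> K" using K by auto
      have "dim (K \<inter> span F) < dim (L \<inter> span F)"
        using dim_strict_codim[OF li_subspace li_subspace[OF L(1)] KL _ assms(3,4)] K by blast
      moreover have "?P (dim (K \<inter> span F))" using K IK by blast
      ultimately show False using n(2) L(3) by blast
    qed
  qed
  then show ?thesis using L by blast
qed

lemma prime_contains_jac:
  assumes P: "prime_ideal P" and fc: "finite_codim P"
  shows "jacobson_radical \<subseteq> P"
proof -
  from fc obtain F where F: "finite F" "\<forall>a. \<exists>s\<in>span F. a - s \<in> P"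
    unfolding finite_codim_def by blast
  have PT: "two_sided_ideal P" "P \<noteq> UNIV" using P prime_ideal_def by auto
  have PL: "left_ideal P" using two_sided_left PT(1) by blast
  obtain L where L: "left_ideal L" "P \<subset> L"
    and Lmin: "\<forall>K. left_ideal K \<and> P \<subseteq> K \<and> K \<subseteq> L \<longrightarrow> K = P \<or> K = L"
    using minimal_left[OF PL PT(2) F] by blast
  have JL: "\<forall>t\<in>jacobson_radical. \<forall>l\<in>L. t*l \<in> P"
  proof (intro ballI)
    fix t l :: 'a assume t: "t \<in> jacobson_radical" and l: "l \<in> L"
    show "t*l \<in> P"
    proof (cases "l \<in> P")
      case True then show ?thesis using li_mult[OF PL] by blast
    next
      case False
      let ?Al = "{b*l + m | b m. m \<in> P}"
      have "left_ideal {b*l + m | b m. b \<in> (UNIV::'a set) \<and> m \<in> P}"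
        by (rule left_ideal_sum[OF _ PL]) (simp add: left_ideal_def)
      then have AlL: "left_ideal ?Al" by simp
      have PAl: "P \<subseteq> ?Al"
      proof
        fix m assume "m \<in> P" then have "0*l + m \<in> ?Al" by blast
        then show "m \<in> ?Al" by simp
      qed
      have AlsubL: "?Al \<subseteq> L"
      proof
        fix x assume "x \<in> ?Al"
        then obtain b m where bm: "x = b*l + m" "m \<in> P" by blast
        have "b*l \<in> L" using li_mult[OF L(1) l] .
        moreover have "m \<in> L" using bm(2) L(2) by blast
        ultimately show "x \<in> L" using li_add[OF L(1)] bm(1) by simp
      qed
      have "1*l + 0 \<in> ?Al" using li_0[OF PL] by blast
      then have "?Al \<noteq> P" using False by auto
      then have eqL: "?Al = L" using Lmin AlL PAl AlsubL by blast
      have ne: "{b. b*l \<in> P} \<noteq> UNIV"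
      proof
        assume "{b. b*l \<in> P} = UNIV"
        then have "1 * l \<in> P" by blast
        then show False using False by simp
      qed
      have "maximal_left_ideal {b. b*l \<in> P}"
      proof (rule colon_maximal[OF PL _ ne])
        fix K assume "left_ideal K" "P \<subseteq> K" "K \<subseteq> ?Al"
        then show "K = P \<or> K = ?Al" using Lmin eqL by auto
      qed
      then have "t \<in> {b. b*l \<in> P}" using t unfolding jacobson_radical_def by blast
      then show ?thesis by simp
    qed
  qed
  have "\<not> L \<subseteq> P" using L(2) by blast
  then show ?thesis using prime_ann[OF P jac_two_sided JL] by blast
qed

lemma finite_primes_above:
  assumes J: "two_sided_ideal J" and G: "finite G" "\<forall>a. \<exists>s\<in>span G. a - s \<in> J"
  shows "two_sided_ideal I \<Longrightarrow> J \<subseteq> I \<Longrightarrow> finite {P. prime_ideal P \<and> I \<subseteq> P}"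
proof (induction "card G - dim (I \<inter> span G)" arbitrary: I rule: less_induct)
  case less
  have codim: "\<forall>a. \<exists>s\<in>span G. a - s \<in> I" using G(2) less.prems(2) by blast
  have step: "finite {P. prime_ideal P \<and> I' \<subseteq> P}" if I': "two_sided_ideal I'" "I \<subset> I'" for I'
  proof (rule less.hyps)
    have "dim (I \<inter> span G) < dim (I' \<inter> span G)"
      by (rule dim_strict_codim[OF li_subspace[OF two_sided_left[OF less.prems(1)]]
            li_subspace[OF two_sided_left[OF I'(1)]] I'(2) order_refl G(1) codim])
    moreover have "dim (I' \<inter> span G) \<le> card G" by (rule dim_le_card[OF _ G(1)]) blast
    ultimately show "card G - dim (I' \<inter> span G) < card G - dim (I \<inter> span G)" by linarith
    show "two_sided_ideal I'" by (rule I'(1))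
    show "J \<subseteq> I'" using less.prems(2) I'(2) by blast
  qed
  have gen_step: "finite {P. prime_ideal P \<and> I \<subseteq> P \<and> X \<subseteq> P}" if nX: "\<not> X \<subseteq> I" for X
  proof -
    have "{P. prime_ideal P \<and> I \<subseteq> P \<and> X \<subseteq> P} \<subseteq> {P. prime_ideal P \<and> gen_ideal (I \<union> X) \<subseteq> P}"
    proof
      fix P assume "P \<in> {P. prime_ideal P \<and> I \<subseteq> P \<and> X \<subseteq> P}"
      then have "prime_ideal P" "I \<union> X \<subseteq> P" by auto
      then show "P \<in> {P. prime_ideal P \<and> gen_ideal (I \<union> X) \<subseteq> P}"
        using gen_ideal_least[of P "I \<union> X"] unfolding prime_ideal_def by blast
    qed
    moreover have "finite {P. prime_ideal P \<and> gen_ideal (I \<union> X) \<subseteq> P}"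
    proof (rule step[OF gen_ideal_ideal])
      show "I \<subset> gen_ideal (I \<union> X)" using gen_ideal_sup[of "I \<union> X"] nX by blast
    qed
    ultimately show ?thesis using finite_subset by blast
  qed
  show ?case
  proof (cases "I = UNIV")
    case True
    then have "{P. prime_ideal P \<and> I \<subseteq> P} = {}" by (auto simp: prime_ideal_def)
    then show ?thesis by (metis finite.emptyI)
  next
    case NU: False
    show ?thesis
    proof (cases "prime_ideal I")
      case True
      have IL: "left_ideal I" using two_sided_left[OF less.prems(1)] .
      obtain L where L: "left_ideal L" "I \<subset> L"
        and Lmin: "\<forall>K. left_ideal K \<and> I \<subseteq> K \<and> K \<subseteq> L \<longrightarrow> K = I \<or> K = L"
        using minimal_left[OF IL NU G(1) codim] by blast
      have above: "L \<subseteq> T" if T: "two_sided_ideal T" "I \<subset> T" for T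
      proof -
        have "\<not> (\<forall>t\<in>T. \<forall>l\<in>L. t*l \<in> I)"
        proof
          assume "\<forall>t\<in>T. \<forall>l\<in>L. t*l \<in> I"
          moreover have "\<not> L \<subseteq> I" using L(2) by blast
          ultimately have "T \<subseteq> I" using prime_ann[OF True T(1)] by blast
          then show False using T(2) by blast
        qed
        then obtain t l where tl: "t \<in> T" "l \<in> L" "t*l \<notin> I" by blast
        let ?K = "{b*(t*l) + m | b m. m \<in> I}"
        have "left_ideal {b*(t*l) + m | b m. b \<in> (UNIV::'a set) \<and> m \<in> I}"
          by (rule left_ideal_sum[OF _ IL]) (simp add: left_ideal_def)
        then have KL: "left_ideal ?K" by simp
        have IK: "I \<subseteq> ?K"
        proof
          fix m assume "m \<in> I" then have "0*(t*l) + m \<in> ?K" by blast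
          then show "m \<in> ?K" by simp
        qed
        have tlL: "t*l \<in> L" using li_mult[OF L(1) tl(2)] .
        have tlT: "t*l \<in> T" using T(1) tl(1) unfolding two_sided_ideal_def by blast
        have KsubL: "?K \<subseteq> L"
        proof
          fix x assume "x \<in> ?K"
          then obtain b m where bm: "x = b*(t*l) + m" "m \<in> I" by blast
          have "b*(t*l) \<in> L" using li_mult[OF L(1) tlL] .
          moreover have "m \<in> L" using bm(2) L(2) by blast
          ultimately show "x \<in> L" using li_add[OF L(1)] bm(1) by simp
        qed
        have KsubT: "?K \<subseteq> T"
        proof
          fix x assume "x \<in> ?K"
          then obtain b m where bm: "x = b*(t*l) + m" "m \<in> I" by blast
          have TL: "left_ideal T" using two_sided_left[OF T(1)] .
          have "b*(t*l) \<in> T" using li_mult[OF TL tlT] .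
          moreover have "m \<in> T" using bm(2) T(2) by blast
          ultimately show "x \<in> T" using li_add[OF TL] bm(1) by simp
        qed
        have "1*(t*l) + 0 \<in> ?K" using li_0[OF IL] by blast
        then have "?K \<noteq> I" using tl(3) by auto
        then have "?K = L" using Lmin KL IK KsubL by blast
        then show ?thesis using KsubT by blast
      qed
      have "{P. prime_ideal P \<and> I \<subseteq> P} \<subseteq> insert I {P. prime_ideal P \<and> I \<subseteq> P \<and> L \<subseteq> P}"
      proof
        fix P assume "P \<in> {P. prime_ideal P \<and> I \<subseteq> P}"
        then have P: "prime_ideal P" "I \<subseteq> P" by auto
        show "P \<in> insert I {P. prime_ideal P \<and> I \<subseteq> P \<and> L \<subseteq> P}"
        proof (cases "P = I")
          case False
          then have "L \<subseteq> P" using above[of P] P unfolding prime_ideal_def by blast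
          then show ?thesis using P by blast
        qed simp
      qed
      moreover have "finite {P. prime_ideal P \<and> I \<subseteq> P \<and> L \<subseteq> P}"
        using gen_step L(2) by blast
      ultimately show ?thesis using finite_subset by blast
    next
      case False
      then obtain X Y where XY: "two_sided_ideal X" "two_sided_ideal Y" "\<forall>x\<in>X. \<forall>y\<in>Y. x*y \<in> I"
          "\<not> X \<subseteq> I" "\<not> Y \<subseteq> I"
        using less.prems(1) NU unfolding prime_ideal_def by blast
      have "{P. prime_ideal P \<and> I \<subseteq> P} \<subseteq>
          {P. prime_ideal P \<and> I \<subseteq> P \<and> X \<subseteq> P} \<union> {P. prime_ideal P \<and> I \<subseteq> P \<and> Y \<subseteq> P}"
      proof
        fix P assume "P \<in> {P. prime_ideal P \<and> I \<subseteq> P}"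
        then have P: "prime_ideal P" "I \<subseteq> P" by auto
        have "\<forall>x\<in>X. \<forall>y\<in>Y. x*y \<in> P" using XY(3) P(2) by blast
        then have "X \<subseteq> P \<or> Y \<subseteq> P" using P(1) XY(1,2) unfolding prime_ideal_def by blast
        then show "P \<in> {P. prime_ideal P \<and> I \<subseteq> P \<and> X \<subseteq> P} \<union> {P. prime_ideal P \<and> I \<subseteq> P \<and> Y \<subseteq> P}"
          using P by blast
      qed
      moreover have "finite ({P. prime_ideal P \<and> I \<subseteq> P \<and> X \<subseteq> P} \<union> {P. prime_ideal P \<and> I \<subseteq> P \<and> Y \<subseteq> P})"
        using gen_step XY(4,5) by blast
      ultimately show ?thesis using finite_subset by blast
    qed
  qed
qed

end

theorem proposition2p1:
  fixes scale :: "'k::field \<Rightarrow> 'a::ring_1 \<Rightarrow> 'a"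
  assumes "k_algebra scale"
    and "k_algebra.just_infinite scale"
    and "(jacobson_radical :: 'a set) \<noteq> {0}"
  shows "finite {P :: 'a set. prime_ideal P}"
proof -
  interpret k_algebra scale by (rule assms(1))
  let ?J = "jacobson_radical :: 'a set"
  have JT: "two_sided_ideal ?J" by (rule jac_two_sided)
  have "finite_codim ?J" using assms(2,3) JT unfolding just_infinite_def by blast
  then obtain G where G: "finite G" "\<forall>a. \<exists>s\<in>span G. a - s \<in> ?J"
    unfolding finite_codim_def by blast
  have "{P::'a set. prime_ideal P} \<subseteq> insert {0} {P. prime_ideal P \<and> ?J \<subseteq> P}"
  proof
    fix P :: "'a set" assume "P \<in> {P. prime_ideal P}"
    then have P: "prime_ideal P" by simp
    show "P \<in> insert {0} {P. prime_ideal P \<and> ?J \<subseteq> P}"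
    proof (cases "P = {0}")
      case False
      have "finite_codim P" using assms(2) P False unfolding just_infinite_def prime_ideal_def by blast
      then show ?thesis using prime_contains_jac P by blast
    qed simp
  qed
  moreover have "finite {P. prime_ideal P \<and> ?J \<subseteq> P}"
    by (rule finite_primes_above[OF JT G JT order_refl])
  ultimately show ?thesis using finite_subset by blast
qed

end
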